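(* Let $\vartheta(z,\tau)=\sum_{m\in\mathbf{Z}}e^{\pi i m^2\tau+2\pi i mz}$ for $z\in\mathbf{C}$, $\operatorname{Im}\tau>0$, and for $t>0$ let $c(t)=\min_{x\in\mathbf{R}}\vartheta(x,it)$ and $C(t)=\vartheta(0,it)$. Then (i) for every $t>0$, $c(t)=\vartheta(\tfrac12,it)$; (ii) for every $t>0.527$, $\dfrac{C(t)\,(C(t)-1)}{c(t)}<1$. *)

theory Defs
  imports "HOL-Analysis.Analysis"
begin

text \<open>Jacobi theta function: sum over all integers m of exp(pi i m^2 tau + 2 pi i m z).
  For Im tau > 0 the series converges absolutely, so the unordered sum is the usual one.\<close>
definition theta :: "complex \<Rightarrow> complex \<Rightarrow> complex" where
  "theta z \<tau> = (\<Sum>\<^sub>\<infinity>m::int. exp (pi * \<i> * of_int m ^ 2 * \<tau> + 2 * pi * \<i> * of_int m * z))"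

text \<open>c(t) = min over real x of theta(x, i t) (theta(x,it) is real for real x, t > 0).\<close>
definition theta_min :: "real \<Rightarrow> real" where
  "theta_min t = (INF x::real. Re (theta (of_real x) (\<i> * of_real t)))"

definition theta_C :: "real \<Rightarrow> real" where
  "theta_C t = Re (theta 0 (\<i> * of_real t))"

end

theory Submission
  imports Defs
begin


definition Pp :: "real \<Rightarrow> nat \<Rightarrow> real" where
  "Pp q a = (\<Prod>i=1..a. 1 - q^(2*i))"
definition iP :: "real \<Rightarrow> int \<Rightarrow> real" where
  "iP q k = (if k < 0 then 0 else 1 / Pp q (nat k))"
definition cc :: "real \<Rightarrow> nat \<Rightarrow> int \<Rightarrow> real" where
  "cc q n k = q powi (k*k) * Pp q (2*n) * iP q (int n + k) * iP q (int n - k)"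

lemma qpow_lt1: "0 < q \<Longrightarrow> (q::real) < 1 \<Longrightarrow> k > 0 \<Longrightarrow> q^k < 1"
  by (simp add: power_less_one_iff)

lemma Pp_pos: "0 < q \<Longrightarrow> q < 1 \<Longrightarrow> Pp q a > 0"
  unfolding Pp_def by (intro prod_pos) (auto simp: power_less_one_iff)

lemma Pp_Suc: "Pp q (Suc a) = Pp q a * (1 - q^(2*Suc a))"
  unfolding Pp_def by (simp add: prod.cl_ivl_Suc)

lemma iP_step:
  assumes "0 < q" "q < 1"
  shows "iP q m = (1 - q powi (2*(m+1))) * iP q (m+1)"
proof (cases "m \<ge> 0")
  case True
  have e: "nat (m+1) = Suc (nat m)" "nat (1+m) = Suc (nat m)" using True by simp_all
  have p: "q powi (2*(m+1)) = q^(2*Suc (nat m))"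
  proof -
    have "2*(m+1) = int (2*Suc (nat m))" using True by simp
    then show ?thesis by (simp only: power_int_of_nat)
  qed
  have "Pp q (Suc (nat m)) > 0" using Pp_pos assms by blast
  moreover have "1 - q^(2*Suc (nat m)) > 0" using qpow_lt1[OF assms, of "2*Suc (nat m)"] by simp
  moreover have "iP q (m+1) = 1/(Pp q (nat m) * (1 - q^(2*Suc (nat m))))"
    unfolding iP_def using True by (simp only: e Pp_Suc) simp
  ultimately show ?thesis using True unfolding p by (simp add: iP_def)
next
  case False
  then show ?thesis unfolding iP_def by (cases "m = -1") auto
qed

lemma cc_rec:
  assumes q: "0 < q" "q < 1"
  shows "cc q (Suc n) k = (1 + q^(4*n+2)) * cc q n k + q^(2*n+1) * (cc q n (k-1) + cc q n (k+1))"
proof -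
  define N where "N = int n"
  define A where "A = iP q (N+k+1)"
  define B where "B = iP q (N-k+1)"
  define X where "X = Pp q (2*n)"
  define E where "E = q powi (k*k)"
  define u where "u = q powi k"
  define a where "a = q^n"
  have q0: "q \<noteq> 0" using q by simp
  have u0: "u \<noteq> 0" using q0 unfolding u_def by simp
  have qN: "q powi N = a" unfolding N_def a_def by (simp add: power_int_of_nat)
  have P2: "Pp q (2*Suc n) = X * (1 - q^(4*n+2)) * (1 - q^(4*n+4))"
  proof -
    have e: "2*Suc n = Suc (Suc (2*n))" "2 * Suc (Suc (2*n)) = 4*n+4" "2*Suc(2*n) = 4*n+2" by simp_all
    show ?thesis unfolding X_def by (simp only: e Pp_Suc mult.assoc)
  qed
  have pw2: "q powi (2*m) = (q powi m)^2" for m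
  proof -
    have "q powi (2*m) = q powi (m*2)" by (simp add: mult.commute)
    also have "\<dots> = (q powi m) powi 2" by (rule power_int_mult)
    finally show ?thesis by simp
  qed
  have f1: "q powi (2*(N+k+1)) = a^2*u^2*q^2"
    unfolding pw2 using q0 by (simp add: power_int_add qN u_def power_mult_distrib)
  have f2: "q powi (2*(N-k+1)) = a^2*q^2/u^2"
    unfolding pw2 using q0 by (simp add: power_int_add power_int_diff qN u_def power_mult_distrib power_divide)
  have f3: "q powi (2*(N+k)) = a^2*u^2"
    unfolding pw2 using q0 by (simp add: power_int_add qN u_def power_mult_distrib)
  have f4: "q powi (2*(N-k)) = a^2/u^2"
    unfolding pw2 using q0 by (simp add: power_int_diff qN u_def power_mult_distrib power_divide)
  have f5: "q powi ((k-1)*(k-1)) = E*q/u^2"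
  proof -
    have "(k-1)*(k-1) = k*k + (1 - 2*k)" by algebra
    then have "q powi ((k-1)*(k-1)) = q powi (k*k + (1 - 2*k))" by simp
    also have "\<dots> = q powi (k*k) * q powi (1 - 2*k)" using q0 by (rule power_int_add[OF disjI1])
    also have "q powi (1 - 2*k) = q / u^2" using q0 by (simp add: power_int_diff pw2 u_def)
    finally show ?thesis unfolding E_def by simp
  qed
  have f6: "q powi ((k+1)*(k+1)) = E*q*u^2"
  proof -
    have "(k+1)*(k+1) = k*k + (2*k + 1)" by algebra
    then have "q powi ((k+1)*(k+1)) = q powi (k*k + (2*k + 1))" by simp
    also have "\<dots> = q powi (k*k) * q powi (2*k + 1)" using q0 by (rule power_int_add[OF disjI1])
    also have "q powi (2*k + 1) = q * u^2" using q0 by (simp add: power_int_add pw2 u_def)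
    finally show ?thesis unfolding E_def by simp
  qed
  have i1: "iP q (N+k) = (1 - a^2*u^2*q^2) * A"
    using iP_step[OF q, of "N+k"] f1 unfolding A_def by simp
  have i2: "iP q (N-k) = (1 - a^2*q^2/u^2) * B"
    using iP_step[OF q, of "N-k"] f2 unfolding B_def by simp
  have i3: "iP q (N+k-1) = (1 - a^2*u^2) * (1 - a^2*u^2*q^2) * A"
    using iP_step[OF q, of "N+k-1"] f3 i1 by simp
  have i4: "iP q (N-k-1) = (1 - a^2/u^2) * (1 - a^2*q^2/u^2) * B"
    using iP_step[OF q, of "N-k-1"] f4 i2 by simp
  have p1: "q^(4*n+2) = a^4*q^2" "q^(2*n+1) = a^2*q" "q^(4*n+4) = a^4*q^4"
    unfolding a_def by (simp_all only: power_add power_mult[symmetric] mult.commute[of 4 n] mult.commute[of 2 n] power_one_right)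
  have c0: "cc q (Suc n) k = E * (X * (1 - a^4*q^2) * (1 - a^4*q^4)) * A * B"
  proof -
    have e: "int (Suc n) + k = N+k+1" "int (Suc n) - k = N-k+1" unfolding N_def by simp_all
    show ?thesis unfolding cc_def e P2 p1 E_def[symmetric] A_def[symmetric] B_def[symmetric] by (simp only: mult_ac)
  qed
  have c1: "cc q n k = E * X * ((1 - a^2*u^2*q^2) * A) * ((1 - a^2*q^2/u^2) * B)"
    unfolding cc_def N_def[symmetric] i1[symmetric] i2[symmetric] E_def[symmetric] X_def[symmetric] by (simp only: mult_ac)
  have c2: "cc q n (k-1) = E*q/u^2 * X * ((1 - a^2*u^2) * (1 - a^2*u^2*q^2) * A) * B"
  proof -
    have e: "N + (k-1) = N+k-1" "N - (k-1) = N-k+1" by simp_all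
    show ?thesis unfolding cc_def N_def[symmetric] X_def[symmetric] e B_def[symmetric] i3 f5 by (simp only: mult_ac)
  qed
  have c3: "cc q n (k+1) = E*q*u^2 * X * A * ((1 - a^2/u^2) * (1 - a^2*q^2/u^2) * B)"
  proof -
    have e: "N + (k+1) = N+k+1" "N - (k+1) = N-k-1" by simp_all
    show ?thesis unfolding cc_def N_def[symmetric] X_def[symmetric] e A_def[symmetric] i4 f6 by (simp only: mult_ac)
  qed
  show ?thesis unfolding c0 c1 c2 c3 p1 using u0
    by (simp add: field_simps) algebra
qed

lemma cc_out: "\<bar>k\<bar> > int n \<Longrightarrow> cc q n k = 0"
  unfolding cc_def iP_def by auto

lemma cc_ext:
  assumes "finite F" "{-int n..int n} \<subseteq> F"
  shows "(\<Sum>k\<in>F. cc q n k * g k) = (\<Sum>k\<in>{-int n..int n}. cc q n k * g k)"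
  by (rule sum.mono_neutral_right[OF assms]) (auto intro!: cc_out)

lemma sum_shift_int: "(\<Sum>k\<in>{a..b::int}. f (k + c)) = (\<Sum>k\<in>{a+c..b+c}. f k)"
  by (rule sum.reindex_bij_witness[of _ "\<lambda>j. j - c" "\<lambda>k. k + c"]) auto

lemma cc_sum:
  assumes q: "0 < q" "q < 1"
  shows "(\<Sum>k\<in>{-int n..int n}. cc q n k * cos (of_int k * y)) =
         (\<Prod>j=1..n. 1 + 2*q^(2*j-1)*cos y + q^(4*j-2))"
proof (induction n)
  case 0
  then show ?case by (simp add: cc_def iP_def Pp_def)
next
  case (Suc n)
  define S where "S = (\<Sum>k\<in>{-int n..int n}. cc q n k * cos (of_int k * y))"
  define I where "I = {-int (Suc n)..int (Suc n)}"
  have fI: "finite I" unfolding I_def by simp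
  have s0: "(\<Sum>k\<in>I. cc q n k * cos (of_int k * y)) = S"
    unfolding S_def by (rule cc_ext) (auto simp: I_def)
  have s1: "(\<Sum>k\<in>I. cc q n (k-1) * cos (of_int k * y)) =
            (\<Sum>k\<in>{-int n..int n}. cc q n k * cos (of_int (k+1) * y))"
  proof -
    have "(\<Sum>k\<in>I. cc q n (k-1) * cos (of_int k * y)) =
          (\<Sum>k\<in>I. (\<lambda>j. cc q n j * cos (of_int (j+1) * y)) (k + (-1)))" by simp
    also have "\<dots> = (\<Sum>k\<in>{-int (Suc n) + (-1)..int (Suc n) + (-1)}. cc q n k * cos (of_int (k+1) * y))"
      unfolding I_def by (rule sum_shift_int)
    also have "\<dots> = (\<Sum>k\<in>{-int n..int n}. cc q n k * cos (of_int (k+1) * y))"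
      by (rule cc_ext) auto
    finally show ?thesis .
  qed
  have s2: "(\<Sum>k\<in>I. cc q n (k+1) * cos (of_int k * y)) =
            (\<Sum>k\<in>{-int n..int n}. cc q n k * cos (of_int (k-1) * y))"
  proof -
    have "(\<Sum>k\<in>I. cc q n (k+1) * cos (of_int k * y)) =
          (\<Sum>k\<in>I. (\<lambda>j. cc q n j * cos (of_int (j-1) * y)) (k + 1))" by simp
    also have "\<dots> = (\<Sum>k\<in>{-int (Suc n) + 1..int (Suc n) + 1}. cc q n k * cos (of_int (k-1) * y))"
      unfolding I_def by (rule sum_shift_int)
    also have "\<dots> = (\<Sum>k\<in>{-int n..int n}. cc q n k * cos (of_int (k-1) * y))"
      by (rule cc_ext) auto
    finally show ?thesis .
  qed
  have cs: "cos (of_int (k+1) * y) + cos (of_int (k-1) * y) = 2 * cos y * cos (of_int k * y)" for k :: int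
    by (simp add: distrib_right left_diff_distrib cos_add cos_diff)
  have s12: "(\<Sum>k\<in>{-int n..int n}. cc q n k * cos (of_int (k+1) * y)) +
             (\<Sum>k\<in>{-int n..int n}. cc q n k * cos (of_int (k-1) * y)) = 2 * cos y * S"
    unfolding S_def sum.distrib[symmetric] sum_distrib_left
  proof (rule sum.cong[OF refl])
    fix x
    have "cc q n x * cos (of_int (x+1) * y) + cc q n x * cos (of_int (x-1) * y) =
          cc q n x * (cos (of_int (x+1) * y) + cos (of_int (x-1) * y))" by (simp only: distrib_left)
    also have "\<dots> = cc q n x * (2 * cos y * cos (of_int x * y))" by (simp only: cs)
    finally show "cc q n x * cos (of_int (x+1) * y) + cc q n x * cos (of_int (x-1) * y) =
          2 * cos y * (cc q n x * cos (of_int x * y))" by simp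
  qed
  have "(\<Sum>k\<in>I. cc q (Suc n) k * cos (of_int k * y)) =
        (1 + q^(4*n+2)) * (\<Sum>k\<in>I. cc q n k * cos (of_int k * y)) +
        q^(2*n+1) * ((\<Sum>k\<in>I. cc q n (k-1) * cos (of_int k * y)) + (\<Sum>k\<in>I. cc q n (k+1) * cos (of_int k * y)))"
    unfolding cc_rec[OF q] sum_distrib_left sum.distrib[symmetric]
    by (rule sum.cong) (auto simp: algebra_simps)
  also have "\<dots> = (1 + q^(4*n+2) + 2*q^(2*n+1)*cos y) * S"
    unfolding s0 s1 s2 s12 by (simp add: algebra_simps)
  finally have "(\<Sum>k\<in>I. cc q (Suc n) k * cos (of_int k * y)) = (1 + q^(4*n+2) + 2*q^(2*n+1)*cos y) * S" .
  moreover have "(\<Prod>j=1..Suc n. 1 + 2*q^(2*j-1)*cos y + q^(4*j-2)) =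
     (\<Prod>j=1..n. 1 + 2*q^(2*j-1)*cos y + q^(4*j-2)) * (1 + 2*q^(2*n+1)*cos y + q^(4*n+2))"
  proof -
    have "2 * Suc n - 1 = 2*n+1" "4 * Suc n - 2 = 4*n+2" by simp_all
    then show ?thesis by (simp add: prod.cl_ivl_Suc)
  qed
  ultimately show ?case using Suc.IH unfolding I_def S_def by (simp add: algebra_simps)
qed



definition w :: "real \<Rightarrow> nat \<Rightarrow> int \<Rightarrow> real" where
  "w q n k = Pp q n ^ 2 * iP q (int n + k) * iP q (int n - k)"

lemma iP_nonneg: "0 < q \<Longrightarrow> q < 1 \<Longrightarrow> iP q k \<ge> 0"
  unfolding iP_def using Pp_pos[of q] by (auto intro: less_imp_le)

lemma w_nonneg: "0 < q \<Longrightarrow> q < 1 \<Longrightarrow> w q n k \<ge> 0"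
  unfolding w_def using iP_nonneg[of q] by simp

lemma w_sym: "w q n (-k) = w q n k"
  unfolding w_def by simp

lemma cc_w: "0 < q \<Longrightarrow> q < 1 \<Longrightarrow> cc q n k = (Pp q (2*n) / Pp q n ^ 2) * (q powi (k*k) * w q n k)"
  unfolding cc_def w_def using Pp_pos[of q n] by (simp add: field_simps)

lemma Pp_add: "Pp q (a + m) = Pp q a * (\<Prod>i=1..m. 1 - q^(2*(a+i)))"
proof (induction m)
  case 0
  then show ?case by simp
next
  case (Suc m)
  have "Pp q (a + Suc m) = Pp q (a + m) * (1 - q^(2*(a + Suc m)))"
    using Pp_Suc[of q "a+m"] by simp
  then show ?case using Suc.IH by (simp add: prod.cl_ivl_Suc)
qed

lemma w_nat:
  assumes q: "0 < q" "q < 1" and mn: "m \<le> n"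
  shows "w q n (int m) = (\<Prod>i=1..m. 1 - q^(2*(n-m+i))) / (\<Prod>i=1..m. 1 - q^(2*(n+i)))"
proof -
  define R1 where "R1 = (\<Prod>i=1..m. 1 - q^(2*(n-m+i)))"
  define R2 where "R2 = (\<Prod>i=1..m. 1 - q^(2*(n+i)))"
  have h1: "Pp q n = Pp q (n-m) * R1" using Pp_add[of q "n-m" m] mn unfolding R1_def by simp
  have h2: "Pp q (n+m) = Pp q n * R2" using Pp_add[of q n m] unfolding R2_def by simp
  have e1: "int n + int m = int (n+m)" "int n - int m = int (n-m)" using mn by simp_all
  have i1: "iP q (int n + int m) = 1 / Pp q (n+m)" unfolding e1 iP_def nat_int by simp
  have i2: "iP q (int n - int m) = 1 / Pp q (n-m)" unfolding e1 iP_def nat_int by simp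
  have p1: "Pp q (n-m) > 0" "Pp q n > 0" using Pp_pos q by auto
  have "R2 \<noteq> 0" using h2 Pp_pos[OF q, of "n+m"] by auto
  then show ?thesis unfolding w_def i1 i2 h2 R1_def[symmetric] R2_def[symmetric]
    using p1 by (simp add: h1 field_simps power2_eq_square)
qed

lemma R_pos:
  assumes q: "0 < (q::real)" "q < 1"
  shows "(\<Prod>i=1..m. 1 - q^(2*(n+i))) > 0"
proof (rule prod_pos)
  fix i assume "i \<in> {1..m}"
  show "0 < 1 - q^(2*(n+i))" using qpow_lt1[OF q, of "2*(n+i)"] \<open>i \<in> {1..m}\<close> by simp
qed

lemma w_le1:
  assumes q: "0 < q" "q < 1"
  shows "w q n k \<le> 1"
proof (cases "\<bar>k\<bar> \<le> int n")
  case False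
  then have "w q n k = 0" unfolding w_def iP_def by auto
  then show ?thesis by simp
next
  case True
  define m where "m = nat \<bar>k\<bar>"
  have mn: "m \<le> n" using True unfolding m_def by simp
  have "w q n k = w q n (int m)" unfolding m_def using w_sym[of q n k]
    by (cases "k \<ge> 0") auto
  also have "\<dots> = (\<Prod>i=1..m. 1 - q^(2*(n-m+i))) / (\<Prod>i=1..m. 1 - q^(2*(n+i)))"
    by (rule w_nat[OF q mn])
  also have "\<dots> \<le> 1"
  proof -
    have "(\<Prod>i=1..m. 1 - q^(2*(n-m+i))) \<le> (\<Prod>i=1..m. 1 - q^(2*(n+i)))"
    proof (rule prod_mono, safe)
      fix i assume "i \<in> {1..m}"
      show "0 \<le> 1 - q^(2*(n-m+i))" using qpow_lt1[OF q, of "2*(n-m+i)"] \<open>i \<in> {1..m}\<close> by simp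
      have "q^(2*(n+i)) \<le> q^(2*(n-m+i))" using q by (intro power_decreasing) auto
      then show "1 - q^(2*(n-m+i)) \<le> 1 - q^(2*(n+i))" by simp
    qed
    then show ?thesis using R_pos[OF q, where m=m and n=n] by simp
  qed
  finally show ?thesis .
qed

lemma w_lim:
  assumes q: "0 < q" "q < 1"
  shows "(\<lambda>n. w q n k) \<longlonglongrightarrow> 1"
proof -
  define m where "m = nat \<bar>k\<bar>"
  have wk: "w q n k = w q n (int m)" for n unfolding m_def using w_sym[of q n k]
    by (cases "k \<ge> 0") auto
  have ev: "\<forall>\<^sub>F n in sequentially.
     (\<Prod>i=1..m. 1 - (q^2)^n * (q^(2*i) / q^(2*m))) / (\<Prod>i=1..m. 1 - (q^2)^n * q^(2*i)) = w q n k"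
  proof (rule eventually_sequentiallyI[of m])
    fix n assume mn: "m \<le> n"
    have a: "(q^2)^n * (q^(2*i) / q^(2*m)) = q^(2*(n-m+i))" for i
    proof -
      have "q^(2*(n-m+i)) * q^(2*m) = (q^2)^n * q^(2*i)"
        using mn by (simp flip: power_add power_mult) (simp add: algebra_simps)
      then show ?thesis using q by (simp add: field_simps)
    qed
    have b: "(q^2)^n * q^(2*i) = q^(2*(n+i))" for i
      by (simp flip: power_add power_mult add: algebra_simps)
    show "(\<Prod>i=1..m. 1 - (q^2)^n * (q^(2*i) / q^(2*m))) / (\<Prod>i=1..m. 1 - (q^2)^n * q^(2*i)) = w q n k"
      unfolding wk a b using w_nat[OF q mn] by simp
  qed
  have z: "(\<lambda>n. (q^2)^n) \<longlonglongrightarrow> 0" using q by (intro LIMSEQ_power_zero) (simp add: power_less_one_iff)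
  have "(\<lambda>n. (\<Prod>i=1..m. 1 - (q^2)^n * (q^(2*i) / q^(2*m))) / (\<Prod>i=1..m. 1 - (q^2)^n * q^(2*i)))
        \<longlonglongrightarrow> (\<Prod>i=1..m. 1 - 0 * (q^(2*i) / q^(2*m))) / (\<Prod>i=1..m. 1 - 0 * q^(2*i))"
    by (intro tendsto_intros z) simp
  then have "(\<lambda>n. (\<Prod>i=1..m. 1 - (q^2)^n * (q^(2*i) / q^(2*m))) / (\<Prod>i=1..m. 1 - (q^2)^n * q^(2*i)))
        \<longlonglongrightarrow> 1" by simp
  then show ?thesis using ev by (rule Lim_transform_eventually)
qed



lemma Q_mono:
  assumes q: "0 < q" "(q::real) < 1"
  shows "(\<Prod>j=1..n. 1 + 2*q^(2*j-1)*cos pi + q^(4*j-2)) \<le> (\<Prod>j=1..n. 1 + 2*q^(2*j-1)*cos y + q^(4*j-2))"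
proof (rule prod_mono)
  fix j assume j: "j \<in> {1..n}"
  have e: "q^(4*j-2) = (q^(2*j-1))^2"
  proof -
    obtain i where "j = Suc i" using j by (cases j) auto
    then have "4*j-2 = (2*j-1)*2" by simp
    then show ?thesis by (simp only: power_mult)
  qed
  define a where "a = q^(2*j-1)"
  have a0: "a \<ge> 0" using q unfolding a_def by simp
  have "0 \<le> (1 - a)^2" by simp
  also have "(1 - a)^2 = 1 + 2*a*cos pi + a^2" by (simp add: power2_eq_square algebra_simps)
  finally have "0 \<le> 1 + 2*a*cos pi + a^2" .
  moreover have "2*a*cos pi \<le> 2*a*cos y" using mult_left_mono[OF cos_ge_minus_one[of y] a0] by simp
  ultimately show "0 \<le> 1 + 2*q^(2*j-1)*cos pi + q^(4*j-2) \<and>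
      1 + 2*q^(2*j-1)*cos pi + q^(4*j-2) \<le> 1 + 2*q^(2*j-1)*cos y + q^(4*j-2)"
    unfolding e a_def[symmetric] by linarith
qed

lemma T_nonneg:
  assumes q: "0 < q" "(q::real) < 1"
  shows "(\<Sum>k\<in>{-int n..int n}. q powi (k*k) * w q n k * (cos (of_int k * y) - cos (of_int k * pi))) \<ge> 0"
proof -
  define K where "K = Pp q (2*n) / Pp q n ^ 2"
  have K: "K > 0" unfolding K_def using Pp_pos[OF q, of "2*n"] Pp_pos[OF q, of n]
    by (intro divide_pos_pos zero_less_power) auto
  have "(\<Sum>k\<in>{-int n..int n}. cc q n k * (cos (of_int k * y) - cos (of_int k * pi))) =
        (\<Sum>k\<in>{-int n..int n}. cc q n k * cos (of_int k * y)) - (\<Sum>k\<in>{-int n..int n}. cc q n k * cos (of_int k * pi))"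
    by (simp add: sum_subtractf right_diff_distrib)
  also have "\<dots> \<ge> 0" unfolding cc_sum[OF q] using Q_mono[OF q, of n y] by simp
  finally have "0 \<le> (\<Sum>k\<in>{-int n..int n}. K * (q powi (k*k) * w q n k * (cos (of_int k * y) - cos (of_int k * pi))))"
    unfolding cc_w[OF q] K_def by (simp add: mult.assoc)
  then have "0 \<le> K * (\<Sum>k\<in>{-int n..int n}. q powi (k*k) * w q n k * (cos (of_int k * y) - cos (of_int k * pi)))"
    by (simp add: sum_distrib_left)
  then show ?thesis using K by (simp add: zero_le_mult_iff)
qed

lemma main_ineq:
  assumes q: "0 < q" "(q::real) < 1"
    and int: "integrable (count_space UNIV) (\<lambda>k::int. q powi (k*k))"
  shows "(\<integral>k. q powi (k*k) * (cos (of_int k * y) - cos (of_int k * pi)) \<partial>count_space UNIV) \<ge> 0"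
proof -
  define d where "d k = cos (of_int k * y) - cos (of_int k * pi)" for k :: int
  define s where "s n k = q powi (k*k) * w q n k * d k" for n k
  have T: "(\<integral>k. s n k \<partial>count_space UNIV) = (\<Sum>k\<in>{-int n..int n}. s n k)" for n
  proof -
    have sub: "{a \<in> UNIV. s n a \<noteq> 0} \<subseteq> {-int n..int n}"
      unfolding s_def w_def iP_def by auto
    have "(\<integral>k. s n k \<partial>count_space UNIV) = (\<Sum>a | a \<in> UNIV \<and> s n a \<noteq> 0. s n a)"
      by (rule lebesgue_integral_count_space_finite_support) (rule finite_subset[OF sub], simp)
    also have "\<dots> = (\<Sum>k\<in>{-int n..int n}. s n k)"
      by (rule sum.mono_neutral_left) (use sub in auto)
    finally show ?thesis .
  qed
  have lim: "(\<lambda>n. \<integral>k. s n k \<partial>count_space UNIV) \<longlonglongrightarrow> (\<integral>k. q powi (k*k) * d k \<partial>count_space UNIV)"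
  proof (rule integral_dominated_convergence[where w = "\<lambda>k. 2 * q powi (k*k)"])
    show "(\<lambda>k. q powi (k*k) * d k) \<in> borel_measurable (count_space UNIV)" by simp
    show "s n \<in> borel_measurable (count_space UNIV)" for n by simp
    show "integrable (count_space UNIV) (\<lambda>k. 2 * q powi (k*k))" using int by simp
    show "AE k in count_space UNIV. (\<lambda>n. s n k) \<longlonglongrightarrow> q powi (k*k) * d k"
    proof (rule AE_I2)
      fix k :: int
      have "(\<lambda>n. q powi (k*k) * w q n k * d k) \<longlonglongrightarrow> q powi (k*k) * 1 * d k"
        by (intro tendsto_intros w_lim[OF q])
      then show "(\<lambda>n. s n k) \<longlonglongrightarrow> q powi (k*k) * d k" unfolding s_def by simp
    qed
    show "AE k in count_space UNIV. norm (s n k) \<le> 2 * q powi (k*k)" for n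
    proof (rule AE_I2)
      fix k :: int
      have W: "q powi (k*k) \<ge> 0" using q by simp
      have d: "\<bar>d k\<bar> \<le> 2" unfolding d_def
        using abs_cos_le_one[of "of_int k * y"] abs_cos_le_one[of "of_int k * pi"] by linarith
      have ww: "\<bar>w q n k\<bar> \<le> 1" using w_nonneg[OF q] w_le1[OF q] by (simp add: abs_le_iff)
      have "\<bar>w q n k * d k\<bar> \<le> 1 * 2" unfolding abs_mult by (rule mult_mono) (use ww d in auto)
      then have "\<bar>q powi (k*k) * (w q n k * d k)\<bar> \<le> q powi (k*k) * 2"
        unfolding abs_mult using W by (simp add: mult_left_mono)
      moreover have "q powi (k*k) * w q n k * d k = q powi (k*k) * (w q n k * d k)" by (simp only: mult.assoc)
      ultimately show "norm (s n k) \<le> 2 * q powi (k*k)" unfolding s_def real_norm_def by linarith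
    qed
  qed
  have "0 \<le> (\<integral>k. q powi (k*k) * d k \<partial>count_space UNIV)"
  proof (rule LIMSEQ_le_const[OF lim], rule exI[of _ 0], intro allI impI)
    fix n :: nat
    have "0 \<le> (\<Sum>k\<in>{-int n..int n}. s n k)" unfolding s_def d_def by (rule T_nonneg[OF q])
    then show "0 \<le> (\<integral>k. s n k \<partial>count_space UNIV)" using T[of n] by simp
  qed
  then show ?thesis unfolding d_def .
qed



lemma even_has_sum:
  fixes f :: "int \<Rightarrow> real"
  assumes ev: "\<And>k. f (-k) = f k" and nn: "\<And>k. f k \<ge> 0" and sm: "summable (\<lambda>n. f (int n))"
  shows "(f has_sum (2 * (\<Sum>n. f (int n)) - f 0)) UNIV"
proof -
  define s where "s = (\<Sum>n. f (int n))"
  have s1: "(\<lambda>n. f (int n)) sums s" unfolding s_def using sm by (rule summable_sums)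
  have h1: "((\<lambda>n. f (int n)) has_sum s) UNIV" using s1 nn by (rule sums_nonneg_imp_has_sum)
  have A: "(f has_sum s) (range int)"
    using h1 by (subst has_sum_reindex) (auto simp: o_def)
  have s2: "(\<lambda>n. f (int (Suc n))) sums (s - f 0)" using s1 by (subst sums_Suc_iff) simp
  have h2: "((\<lambda>n. f (int (Suc n))) has_sum (s - f 0)) UNIV" using s2 nn by (rule sums_nonneg_imp_has_sum)
  have inj: "inj (\<lambda>n::nat. - int (Suc n))" by (auto simp: inj_def)
  have B: "(f has_sum (s - f 0)) (range (\<lambda>n::nat. - int (Suc n)))"
  proof -
    have h2': "((\<lambda>n. f (- int (Suc n))) has_sum (s - f 0)) UNIV" using h2 by (simp only: ev)
    have "((f \<circ> (\<lambda>n::nat. - int (Suc n))) has_sum (s - f 0)) UNIV" unfolding o_def by (rule h2')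
    then show ?thesis by (simp only: has_sum_reindex[OF inj])
  qed
  have U: "range int \<union> range (\<lambda>n::nat. - int (Suc n)) = UNIV"
  proof -
    have "k \<in> range int \<union> range (\<lambda>n::nat. - int (Suc n))" for k :: int
    proof (cases "k \<ge> 0")
      case True then show ?thesis by (auto intro!: image_eqI[of _ _ "nat k"])
    next
      case False then have "k = - int (Suc (nat (-k - 1)))" by simp
      then show ?thesis by blast
    qed
    then show ?thesis by auto
  qed
  have D: "range int \<inter> range (\<lambda>n::nat. - int (Suc n)) = {}" by auto
  have "(f has_sum (s + (s - f 0))) (range int \<union> range (\<lambda>n::nat. - int (Suc n)))"
    by (rule has_sum_Un_disjoint[OF A B D])
  then show ?thesis unfolding U s_def[symmetric] by (simp add: algebra_simps)
qed

definition WW :: "real \<Rightarrow> int \<Rightarrow> real" where "WW t k = exp (-pi*t) powi (k*k)"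

lemma WW_exp: "WW t k = exp (-pi*t*(of_int k)^2)"
proof -
  have "k*k = int (nat (k*k))" by simp
  then have "WW t k = exp (-pi*t) ^ nat (k*k)" unfolding WW_def by (metis power_int_of_nat)
  also have "\<dots> = exp (of_nat (nat (k*k)) * (-pi*t))" by (rule exp_of_nat_mult[symmetric])
  also have "of_nat (nat (k*k)) = (of_int k :: real)^2" by (simp add: power2_eq_square)
  finally show ?thesis by (simp add: algebra_simps)
qed

lemma WW_nonneg: "WW t k \<ge> 0" unfolding WW_exp by simp

lemma WW_summable:
  assumes t: "t > 0"
  shows "summable (\<lambda>n. WW t (int n))"
proof (rule summable_comparison_test'[where N=0])
  show "summable (\<lambda>n. exp (-pi*t) ^ n)" using t by simp
  fix n :: nat
  have "real n \<le> (real n)^2" by (cases n) (auto simp: power2_eq_square)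
  then have "-pi*t*(real n)^2 \<le> -pi*t*real n" using t by (intro mult_left_mono_neg) auto
  then have "WW t (int n) \<le> exp (-pi*t*real n)" unfolding WW_exp by simp
  also have "\<dots> = exp (-pi*t) ^ n" by (simp add: exp_of_nat_mult[symmetric] mult.commute)
  finally show "norm (WW t (int n)) \<le> exp (-pi*t) ^ n" using WW_nonneg[of t "int n"] by simp
qed

lemma WW_has_sum:
  assumes t: "t > 0"
  shows "(WW t has_sum (2 * (\<Sum>n. WW t (int n)) - 1)) UNIV"
  using even_has_sum[of "WW t", OF _ WW_nonneg WW_summable[OF t]] by (simp add: WW_def)

lemma WW_integrable:
  assumes t: "t > 0"
  shows "integrable (count_space UNIV) (WW t)"
proof -
  have "(\<lambda>k. norm (WW t k)) summable_on UNIV"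
    using WW_has_sum[OF t] WW_nonneg[of t] unfolding summable_on_def by auto
  then show ?thesis using abs_summable_equivalent[of "WW t" UNIV] unfolding abs_summable_on_def by simp
qed



lemma term_eq:
  "exp (pi * \<i> * of_int m ^ 2 * (\<i> * of_real t) + 2 * pi * \<i> * of_int m * of_real x) =
   of_real (WW t m) * cis (of_int m * (2*pi*x))"
proof -
  have eq: "pi * \<i> * of_int m ^ 2 * (\<i> * of_real t) + 2 * pi * \<i> * of_int m * of_real x =
        complex_of_real (-pi*t*(of_int m)^2) + \<i> * complex_of_real (of_int m * (2*pi*x))"
    by (simp add: algebra_simps power2_eq_square)
  have "exp (pi * \<i> * of_int m ^ 2 * (\<i> * of_real t) + 2 * pi * \<i> * of_int m * of_real x) =
     exp (complex_of_real (-pi*t*(of_int m)^2)) * exp (\<i> * complex_of_real (of_int m * (2*pi*x)))"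
    by (simp only: eq exp_add)
  also have "\<dots> = of_real (exp (-pi*t*(of_int m)^2)) * cis (of_int m * (2*pi*x))"
    by (simp only: exp_of_real cis_conv_exp)
  finally show ?thesis by (simp only: WW_exp)
qed

lemma WW_even: "WW t (-k) = WW t k" unfolding WW_def by simp

lemma theta_eq:
  "theta (of_real x) (\<i> * of_real t) = (\<Sum>\<^sub>\<infinity>m. of_real (WW t m) * cis (of_int m * (2*pi*x)))"
  unfolding theta_def term_eq ..

lemma theta_summable:
  assumes t: "t > 0"
  shows "(\<lambda>m. of_real (WW t m) * cis (of_int m * (2*pi*x))) summable_on UNIV"
proof (rule abs_summable_summable)
  have "WW t summable_on UNIV" using WW_has_sum[OF t] unfolding summable_on_def by auto
  then show "(\<lambda>m. norm (complex_of_real (WW t m) * cis (of_int m * (2*pi*x)))) summable_on UNIV"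
    using WW_nonneg[of t] by (simp add: norm_mult)
qed

lemma WWcos_integrable:
  assumes t: "t > 0"
  shows "integrable (count_space UNIV) (\<lambda>k. WW t k * cos (of_int k * y))"
proof (rule Bochner_Integration.integrable_bound[OF WW_integrable[OF t]])
  show "(\<lambda>k. WW t k * cos (of_int k * y)) \<in> borel_measurable (count_space UNIV)" by simp
  show "AE k in count_space UNIV. norm (WW t k * cos (of_int k * y)) \<le> norm (WW t k)"
  proof (rule AE_I2)
    fix k
    have "\<bar>WW t k * cos (of_int k * y)\<bar> \<le> \<bar>WW t k\<bar> * 1"
      unfolding abs_mult by (rule mult_left_mono) auto
    then show "norm (WW t k * cos (of_int k * y)) \<le> norm (WW t k)" by simp
  qed
qed

lemma re_theta:
  assumes t: "t > 0"
  shows "Re (theta (of_real x) (\<i> * of_real t)) = (\<integral>k. WW t k * cos (of_int k * (2*pi*x)) \<partial>count_space UNIV)"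
proof -
  have "Re (theta (of_real x) (\<i> * of_real t)) = (\<Sum>\<^sub>\<infinity>m. Re (of_real (WW t m) * cis (of_int m * (2*pi*x))))"
    unfolding theta_eq by (rule infsum_Re[symmetric, OF theta_summable[OF t]])
  also have "\<dots> = (\<Sum>\<^sub>\<infinity>m. WW t m * cos (of_int m * (2*pi*x)))" by simp
  also have "\<dots> = infsetsum (\<lambda>m. WW t m * cos (of_int m * (2*pi*x))) UNIV"
    by (rule infsetsum_infsum[symmetric]) (simp add: abs_summable_on_def WWcos_integrable[OF t])
  also have "\<dots> = (\<integral>k. WW t k * cos (of_int k * (2*pi*x)) \<partial>count_space UNIV)"
    unfolding infsetsum_def ..
  finally show ?thesis .
qed

lemma im_theta:
  assumes t: "t > 0"
  shows "Im (theta (of_real x) (\<i> * of_real t)) = 0"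
proof -
  define g where "g m = WW t m * sin (of_int m * (2*pi*x))" for m
  have "Im (theta (of_real x) (\<i> * of_real t)) = (\<Sum>\<^sub>\<infinity>m. Im (of_real (WW t m) * cis (of_int m * (2*pi*x))))"
    unfolding theta_eq by (rule infsum_Im[symmetric, OF theta_summable[OF t]])
  also have "\<dots> = infsum g UNIV" unfolding g_def by simp
  finally have I: "Im (theta (of_real x) (\<i> * of_real t)) = infsum g UNIV" .
  have "infsum g UNIV = infsum g (uminus ` UNIV)" by simp
  also have "\<dots> = infsum (g \<circ> uminus) UNIV" by (rule infsum_reindex) simp
  also have "g \<circ> uminus = (\<lambda>m. - g m)" unfolding g_def o_def by (auto simp: WW_even)
  also have "infsum (\<lambda>m. - g m) UNIV = - infsum g UNIV" by (rule infsum_uminus)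
  finally have "infsum g UNIV = 0" by simp
  then show ?thesis using I by simp
qed

lemma theta_ineq:
  assumes t: "t > 0"
  shows "Re (theta (1/2) (\<i> * of_real t)) \<le> Re (theta (of_real x) (\<i> * of_real t))"
proof -
  define q where "q = exp (-pi*t)"
  have q: "0 < q" "q < 1" unfolding q_def using t by auto
  have WWq: "WW t = (\<lambda>k. q powi (k*k))" unfolding WW_def q_def by auto
  have h: "(1/2::complex) = of_real (1/2)" by simp
  have e: "(\<lambda>k. WW t k * cos (of_int k * (2*pi*(1/2)))) = (\<lambda>k. WW t k * cos (of_int k * pi))" by simp
  have "0 \<le> (\<integral>k. q powi (k*k) * (cos (of_int k * (2*pi*x)) - cos (of_int k * pi)) \<partial>count_space UNIV)"
    by (rule main_ineq[OF q]) (use WW_integrable[OF t] in \<open>simp add: WWq\<close>)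
  also have "\<dots> = (\<integral>k. WW t k * cos (of_int k * (2*pi*x)) - WW t k * cos (of_int k * pi) \<partial>count_space UNIV)"
    unfolding WWq by (simp add: right_diff_distrib)
  also have "\<dots> = (\<integral>k. WW t k * cos (of_int k * (2*pi*x)) \<partial>count_space UNIV) - (\<integral>k. WW t k * cos (of_int k * pi) \<partial>count_space UNIV)"
    by (rule Bochner_Integration.integral_diff) (rule WWcos_integrable[OF t])+
  finally show ?thesis unfolding h re_theta[OF t] e by simp
qed



lemma theta_min_eq:
  assumes t: "t > 0"
  shows "theta_min t = Re (theta (1/2) (\<i> * of_real t))"
proof -
  have h: "(1/2::complex) = of_real (1/2)" by simp
  show ?thesis unfolding theta_min_def
  proof (rule cInf_eq_minimum)
    show "Re (theta (1/2) (\<i> * of_real t)) \<in> range (\<lambda>x. Re (theta (of_real x) (\<i> * of_real t)))"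
      unfolding h by blast
    fix y assume "y \<in> range (\<lambda>x. Re (theta (of_real x) (\<i> * of_real t)))"
    then show "Re (theta (1/2) (\<i> * of_real t)) \<le> y" using theta_ineq[OF t] by auto
  qed
qed

lemma part1:
  assumes t: "t > 0"
  shows "(\<forall>x::real. theta (of_real x) (\<i> * of_real t) \<in> \<real>) \<and>
         (\<forall>x::real. Re (theta (1/2) (\<i> * of_real t)) \<le> Re (theta (of_real x) (\<i> * of_real t))) \<and>
         theta (1/2) (\<i> * of_real t) = of_real (theta_min t)"
proof (intro conjI allI)
  fix x :: real
  show "theta (of_real x) (\<i> * of_real t) \<in> \<real>" using im_theta[OF t] by (simp add: complex_is_Real_iff)
  show "Re (theta (1/2) (\<i> * of_real t)) \<le> Re (theta (of_real x) (\<i> * of_real t))" by (rule theta_ineq[OF t])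
next
  have h: "(1/2::complex) = of_real (1/2)" by simp
  have "Im (theta (1/2) (\<i> * of_real t)) = 0" unfolding h by (rule im_theta[OF t])
  then show "theta (1/2) (\<i> * of_real t) = of_real (theta_min t)"
    unfolding theta_min_eq[OF t] by (simp add: complex_eq_iff)
qed

lemma exp_lower5:
  assumes "x \<ge> 0"
  shows "(\<Sum>n<5. x^n / fact n) \<le> exp (x::real)"
proof -
  have s: "(\<lambda>n. x^n /\<^sub>R fact n) sums exp x" by (rule exp_converges)
  have "(\<Sum>n<5. x^n /\<^sub>R fact n) \<le> (\<Sum>n. x^n /\<^sub>R fact n)"
    by (rule sum_le_suminf) (use s assms in \<open>auto simp: sums_iff\<close>)
  then show ?thesis using s by (simp add: sums_iff divide_inverse mult.commute)
qed

lemma q_small: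
  assumes t: "t > 0.527"
  shows "exp (-pi*t) < 1/5"
proof -
  have "(\<Sum>n<5. (1.655::real)^n / fact n) \<le> exp 1.655" by (rule exp_lower5) simp
  moreover have "(\<Sum>n<5. (1.655::real)^n / fact n) > 5"
    by (simp add: lessThan_nat_numeral fact_numeral power_numeral_reduce)
  ultimately have e5: "exp (1.655::real) > 5" by linarith
  have "pi * t \<ge> 3.1415 * 0.527" using pi_approx(1) t by (intro mult_mono) auto
  then have "pi * t \<ge> 1.655" by simp
  then have "exp (1.655) \<le> exp (pi*t)" by simp
  with e5 have "exp (pi*t) > 5" by linarith
  then show ?thesis by (simp add: exp_minus field_simps)
qed

lemma C_eq:
  assumes t: "t > 0"
  shows "theta_C t = 2 * (\<Sum>n. WW t (int n)) - 1"
proof -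
  have "theta_C t = (\<integral>k. WW t k * cos (of_int k * (2*pi*0)) \<partial>count_space UNIV)"
    unfolding theta_C_def using re_theta[OF t, of 0] by simp
  also have "\<dots> = (\<integral>k. WW t k \<partial>count_space UNIV)" by simp
  also have "\<dots> = infsetsum (WW t) UNIV" unfolding infsetsum_def ..
  also have "\<dots> = infsum (WW t) UNIV"
    by (rule infsetsum_infsum) (simp add: abs_summable_on_def WW_integrable[OF t])
  also have "\<dots> = 2 * (\<Sum>n. WW t (int n)) - 1" by (rule infsumI[OF WW_has_sum[OF t]])
  finally show ?thesis .
qed

lemma c_lower:
  assumes t: "t > 0"
  shows "theta_min t + theta_C t \<ge> 2"
proof -
  define f where "f k = WW t k * cos (of_int k * pi) + WW t k * cos (of_int k * (2*pi*0))" for k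
  have i1: "integrable (count_space UNIV) (\<lambda>k. WW t k * cos (of_int k * pi))" by (rule WWcos_integrable[OF t])
  have i2: "integrable (count_space UNIV) (\<lambda>k. WW t k * cos (of_int k * (2*pi*0)))" by (rule WWcos_integrable[OF t])
  have fi: "integrable (count_space UNIV) f" unfolding f_def using i1 i2 by simp
  have h: "(1/2::complex) = of_real (1/2)" by simp
  have "theta_min t + theta_C t = (\<integral>k. WW t k * cos (of_int k * pi) \<partial>count_space UNIV) +
        (\<integral>k. WW t k * cos (of_int k * (2*pi*0)) \<partial>count_space UNIV)"
    unfolding theta_min_eq[OF t] theta_C_def h re_theta[OF t]
    using re_theta[OF t, of 0] by simp
  also have "\<dots> = (\<integral>k. f k \<partial>count_space UNIV)" unfolding f_def
    by (rule Bochner_Integration.integral_add[symmetric, OF i1 i2])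
  also have "\<dots> = infsum f UNIV" unfolding infsetsum_def[symmetric]
    by (rule infsetsum_infsum) (simp add: abs_summable_on_def fi)
  finally have eq: "theta_min t + theta_C t = infsum f UNIV" .
  have "(\<lambda>k. norm (f k)) summable_on UNIV"
    using abs_summable_equivalent[of f UNIV] fi unfolding abs_summable_on_def by simp
  then have fs: "f summable_on UNIV" by (rule abs_summable_summable)
  have fn: "f k \<ge> 0" for k
  proof -
    have "f k = WW t k * (cos (of_int k * pi) + 1)" unfolding f_def by (simp add: algebra_simps)
    moreover have "cos (of_int k * pi) + 1 \<ge> 0" using cos_ge_minus_one[of "of_int k * pi"] by linarith
    ultimately show ?thesis using WW_nonneg[of t k] by simp
  qed
  have "sum f {0} \<le> infsum f UNIV"
    by (rule finite_sum_le_infsum[OF fs]) (use fn in auto)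
  moreover have "sum f {0} = 2" unfolding f_def by (simp add: WW_def)
  ultimately show ?thesis using eq by simp
qed

lemma S_bound:
  assumes t: "t > 0"
  shows "(\<Sum>n. WW t (int n)) \<le> 1 + exp (-pi*t) / (1 - exp (-pi*t)^3)"
    and "(\<Sum>n. WW t (int n)) \<ge> 1"
proof -
  define q where "q = exp (-pi*t)"
  have q: "0 < q" "q < 1" unfolding q_def using t by auto
  have q3: "norm (q^3) < 1" using q by (simp add: power_less_one_iff)
  have sm: "summable (\<lambda>n. WW t (int n))" by (rule WW_summable[OF t])
  have sm1: "summable (\<lambda>n. WW t (int (Suc n)))" using sm by (subst summable_Suc_iff)
  have hd: "(\<Sum>n. WW t (int (Suc n))) = (\<Sum>n. WW t (int n)) - 1"
    using suminf_split_head[OF sm] by (simp add: WW_def)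
  have le: "WW t (int (Suc n)) \<le> q * (q^3)^n" for n
  proof -
    have "real n \<le> (real n)^2" by (cases n) (auto simp: power2_eq_square)
    then have "3 * real n + 1 \<le> (real (Suc n))^2" by (simp add: power2_eq_square algebra_simps)
    then have "-pi*t*(real (Suc n))^2 \<le> -pi*t*(3 * real n + 1)" using t by (intro mult_left_mono_neg) auto
    then have "WW t (int (Suc n)) \<le> exp (-pi*t*(3 * real n + 1))" unfolding WW_exp by simp
    also have "\<dots> = q * (q^3)^n" unfolding q_def
      by (simp add: exp_add[symmetric] exp_of_nat_mult[symmetric] power_mult[symmetric] algebra_simps)
    finally show ?thesis .
  qed
  have gs: "summable (\<lambda>n. q * (q^3)^n)" using q3 by (intro summable_mult) simp
  have "(\<Sum>n. WW t (int (Suc n))) \<le> (\<Sum>n. q * (q^3)^n)"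
    by (rule suminf_le[OF le sm1 gs])
  also have "\<dots> = q * (1 / (1 - q^3))" using q3 by (simp add: suminf_mult suminf_geometric)
  finally show "(\<Sum>n. WW t (int n)) \<le> 1 + exp (-pi*t) / (1 - exp (-pi*t)^3)"
    using hd unfolding q_def by simp
  have "0 \<le> (\<Sum>n. WW t (int (Suc n)))" by (rule suminf_nonneg[OF sm1]) (simp add: WW_nonneg)
  then show "(\<Sum>n. WW t (int n)) \<ge> 1" using hd by simp
qed

lemma part2:
  assumes t: "t > 0.527"
  shows "theta_C t * (theta_C t - 1) / theta_min t < 1"
proof -
  have t0: "t > 0" using t by simp
  define q where "q = exp (-pi*t)"
  define C where "C = theta_C t"
  have q: "0 < q" "q < 1/5" unfolding q_def using q_small[OF t] by auto
  have Cu: "C \<le> 1 + 2 * (q / (1 - q^3))" and Cl: "C \<ge> 1"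
    unfolding C_def C_eq[OF t0] q_def using S_bound[OF t0] by auto
  have q3: "q^3 < 1/125"
  proof -
    have "q^3 < (1/5)^3" using q by (intro power_strict_mono) auto
    also have "(1/5::real)^3 = 1/125" by (simp add: power3_eq_cube)
    finally show ?thesis .
  qed
  have q3p: "1 - q^3 > 0" using q3 by simp
  have D: "q / (1 - q^3) < 25/124"
    using q q3 q3p by (simp add: pos_divide_less_eq)
  have C2: "C < 87/62" using Cu D by linarith
  have "C * C < 87/62 * (87/62)" using C2 Cl by (intro mult_strict_mono) auto
  then have CC: "C * C < 2" by simp
  have c: "theta_min t \<ge> 2 - C" using c_lower[OF t0] unfolding C_def by simp
  have cpos: "theta_min t > 0" using c C2 by simp
  have "C * (C - 1) < theta_min t" using CC c by (simp add: algebra_simps)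
  then show ?thesis unfolding C_def[symmetric] using cpos by simp
qed

theorem proposition1p3:
  shows "(\<forall>t::real. t > 0 \<longrightarrow>
            (\<forall>x::real. theta (of_real x) (\<i> * of_real t) \<in> \<real>) \<and>
            (\<forall>x::real. Re (theta (1/2) (\<i> * of_real t)) \<le> Re (theta (of_real x) (\<i> * of_real t))) \<and>
            theta (1/2) (\<i> * of_real t) = of_real (theta_min t))
       \<and> (\<forall>t::real. t > 0.527 \<longrightarrow> theta_C t * (theta_C t - 1) / theta_min t < 1)"
  using part1 part2 by blast


end
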